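(* Let $H$ be a complex infinite-dimensional separable Hilbert space and let $(f_n)_{n=1}^\infty$ be a frame for $H$ with optimal upper frame bound $1$ and analysis operator $U$, such that $e=e((f_n)_{n=1}^\infty)<\infty$ and $\dim\operatorname{Im}(I-U^*U)<\infty$. Let $(x_n)_{n=1}^k$ be any finite sequence in $H$ such that $x_1,\dots,x_k,f_1,f_2,\dots$ is a Parseval frame for $H$. Then $$\sum_{n=1}^k\|x_n\|^2=\sum_{n=1}^\infty(1-\|f_n\|^2)-e.$$
   Context: The analysis operator is $U:H\to\ell^2$, $Ux=(\langle x,f_n\rangle)_n$. The optimal upper frame bound is the infimum of all $B$ with $\sum_n|\langle x,f_n\rangle|^2\le B\|x\|^2$ for all $x$. The excess $e((f_n))$ of a frame is the maximal number of elements that can be deleted so that the remaining sequence is still a frame for $H$. A Parseval frame is a sequence $(h_n)$ with $\sum_n|\langle x,h_n\rangle|^2=\|x\|^2$ for all $x$. *)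

theory Defs
  imports "HOL-Analysis.Analysis"
begin

text \<open>HOL-Analysis only provides real inner product spaces.\<close>

class complex_inner = real_normed_vector +
  fixes scaleC :: "complex \<Rightarrow> 'a \<Rightarrow> 'a" (infixr \<open>*\<^sub>C\<close> 75)
    and cinner :: "'a \<Rightarrow> 'a \<Rightarrow> complex"
  assumes scaleR_scaleC: "scaleR r x = scaleC (complex_of_real r) x"
    and scaleC_add_right: "a *\<^sub>C (x + y) = a *\<^sub>C x + a *\<^sub>C y"
    and scaleC_add_left: "(a + b) *\<^sub>C x = a *\<^sub>C x + b *\<^sub>C x"
    and scaleC_scaleC: "a *\<^sub>C (b *\<^sub>C x) = (a * b) *\<^sub>C x"
    and scaleC_one: "1 *\<^sub>C x = x"
    and cinner_conj: "cinner x y = cnj (cinner y x)"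
    and cinner_add_left: "cinner (x + y) z = cinner x z + cinner y z"
    and cinner_scaleC_left: "cinner (a *\<^sub>C x) y = a * cinner x y"
    and norm_cinner: "norm x = sqrt (Re (cinner x x))"

definition cspan :: "'a::complex_inner set \<Rightarrow> 'a set" where
  "cspan F = {(\<Sum>v\<in>G. c v *\<^sub>C v) | G c. finite G \<and> G \<subseteq> F}"

definition finite_dim_set :: "'a::complex_inner set \<Rightarrow> bool" where
  "finite_dim_set V \<longleftrightarrow> (\<exists>F. finite F \<and> V \<subseteq> cspan F)"

definition infinite_dimensional :: "'a::complex_inner itself \<Rightarrow> bool" where
  "infinite_dimensional _ \<longleftrightarrow> \<not> finite_dim_set (UNIV :: 'a set)"

definition separable_space :: "'a::complex_inner itself \<Rightarrow> bool" where
  "separable_space _ \<longleftrightarrow> (\<exists>D::'a set. countable D \<and> closure D = UNIV)"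

definition frame_on :: "(nat \<Rightarrow> 'a::complex_inner) \<Rightarrow> nat set \<Rightarrow> bool" where
  "frame_on f I \<longleftrightarrow>
     (\<forall>x. summable (\<lambda>n. if n \<in> I then (cmod (cinner x (f n)))\<^sup>2 else 0)) \<and>
     (\<exists>A B. 0 < A \<and> (\<forall>x.
        A * (norm x)\<^sup>2 \<le> (\<Sum>n. if n \<in> I then (cmod (cinner x (f n)))\<^sup>2 else 0) \<and>
        (\<Sum>n. if n \<in> I then (cmod (cinner x (f n)))\<^sup>2 else 0) \<le> B * (norm x)\<^sup>2))"

definition frame :: "(nat \<Rightarrow> 'a::complex_inner) \<Rightarrow> bool" where
  "frame f \<longleftrightarrow> frame_on f UNIV"

definition optimal_upper_frame_bound :: "(nat \<Rightarrow> 'a::complex_inner) \<Rightarrow> real" where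
  "optimal_upper_frame_bound f =
     Inf {B. \<forall>x. (\<Sum>n. (cmod (cinner x (f n)))\<^sup>2) \<le> B * (norm x)\<^sup>2}"

definition parseval_frame :: "(nat \<Rightarrow> 'a::complex_inner) \<Rightarrow> bool" where
  "parseval_frame h \<longleftrightarrow> (\<forall>x. (\<lambda>n. (cmod (cinner x (h n)))\<^sup>2) sums ((norm x)\<^sup>2))"

definition analysis_op :: "(nat \<Rightarrow> 'a::complex_inner) \<Rightarrow> 'a \<Rightarrow> (nat \<Rightarrow> complex)" where
  "analysis_op f x = (\<lambda>n. cinner x (f n))"

definition synthesis_op :: "(nat \<Rightarrow> 'a::complex_inner) \<Rightarrow> (nat \<Rightarrow> complex) \<Rightarrow> 'a" where
  "synthesis_op f c = (\<Sum>n. c n *\<^sub>C f n)"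

definition frame_op :: "(nat \<Rightarrow> 'a::complex_inner) \<Rightarrow> 'a \<Rightarrow> 'a" where
  "frame_op f x = synthesis_op f (analysis_op f x)"

definition ecard :: "nat set \<Rightarrow> enat" where
  "ecard J = (if finite J then enat (card J) else \<infinity>)"

definition excess :: "(nat \<Rightarrow> 'a::complex_inner) \<Rightarrow> enat" where
  "excess f = Sup {ecard J | J. frame_on f (UNIV - J)}"

definition prepend :: "nat \<Rightarrow> (nat \<Rightarrow> 'a) \<Rightarrow> (nat \<Rightarrow> 'a) \<Rightarrow> nat \<Rightarrow> 'a" where
  "prepend k x f n = (if n < k then x n else f (n - k))"

end

theory Submission
  imports Defs
begin

lemma scaleC_zero_left[simp]: "0 *\<^sub>C (x::'a::complex_inner) = 0"
proof -
  have "0 *\<^sub>C x = (of_real 0) *\<^sub>C x" by simp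
  also have "\<dots> = 0 *\<^sub>R x" by (rule scaleR_scaleC[symmetric])
  also have "\<dots> = 0" by simp
  finally show ?thesis .
qed

lemma scaleC_minus1: "(-1) *\<^sub>C (x::'a::complex_inner) = - x"
proof -
  have "(-1) *\<^sub>C x = (of_real (-1)) *\<^sub>C x" by simp
  also have "\<dots> = (-1) *\<^sub>R x" by (rule scaleR_scaleC[symmetric])
  also have "\<dots> = - x" by simp
  finally show ?thesis .
qed

lemma cinner_zero_left[simp]: "cinner 0 (y::'a::complex_inner) = 0"
  using cinner_add_left[of 0 0 y] by simp

lemma cinner_zero_right[simp]: "cinner (y::'a::complex_inner) 0 = 0"
  by (metis cinner_conj cinner_zero_left complex_cnj_zero)

lemma cinner_add_right: "cinner (x::'a::complex_inner) (y + z) = cinner x y + cinner x z"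
  by (metis cinner_conj cinner_add_left complex_cnj_add)

lemma cinner_scaleC_right: "cinner (x::'a::complex_inner) (a *\<^sub>C y) = cnj a * cinner x y"
  by (metis cinner_conj cinner_scaleC_left complex_cnj_mult)

lemma cinner_minus_left: "cinner (- (x::'a::complex_inner)) y = - cinner x y"
proof -
  have "cinner (- x) y = cinner ((-1) *\<^sub>C x) y" by (simp only: scaleC_minus1)
  also have "\<dots> = (-1) * cinner x y" by (rule cinner_scaleC_left)
  finally show ?thesis by simp
qed

lemma cinner_diff_left: "cinner ((x::'a::complex_inner) - y) z = cinner x z - cinner y z"
  unfolding diff_conv_add_uminus[of x y] cinner_add_left cinner_minus_left by simp

lemma cinner_scaleR_left: "cinner (r *\<^sub>R (x::'a::complex_inner)) y = of_real r * cinner x y"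
  unfolding scaleR_scaleC by (rule cinner_scaleC_left)

lemma cinner_sum_left: "cinner (\<Sum>i\<in>A. h i) (y::'a::complex_inner) = (\<Sum>i\<in>A. cinner (h i) y)"
  by (induction A rule: infinite_finite_induct) (simp_all add: cinner_add_left)

lemma cinner_self: "cinner (x::'a::complex_inner) x = of_real ((norm x)\<^sup>2)"
proof -
  have r: "Im (cinner x x) = 0" proof -
    have "Im (cinner x x) = Im (cnj (cinner x x))" using cinner_conj[of x x] by (rule arg_cong)
    then show ?thesis by simp
  qed
  have "Re (cinner x x) \<ge> 0"
  proof (rule ccontr)
    assume "\<not> ?thesis"
    then have "sqrt (Re (cinner x x)) < 0" by simp
    then show False using norm_cinner[of x] norm_ge_zero[of x] by linarith
  qed
  then have "(norm x)\<^sup>2 = Re (cinner x x)" using norm_cinner[of x] by simp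
  then show ?thesis using r by (simp add: complex_eq_iff)
qed

lemma cinner_scaleC_left': "cinner (a *\<^sub>C (x::'a::complex_inner)) y = a * cinner x y"
  by (rule cinner_scaleC_left)

lemma norm_add_scaleC_sq:
  fixes y z :: "'a::complex_inner"
  shows "of_real ((norm (y + c *\<^sub>C z))\<^sup>2) =
    cinner y y + cnj c * cinner y z + c * cnj (cinner y z) + c * cnj c * cinner z z"
proof -
  have "of_real ((norm (y + c *\<^sub>C z))\<^sup>2) = cinner (y + c *\<^sub>C z) (y + c *\<^sub>C z)"
    by (simp add: cinner_self)
  also have "\<dots> = cinner y y + cnj c * cinner y z + c * cinner z y + c * cnj c * cinner z z"
    by (simp add: cinner_add_left cinner_add_right cinner_scaleC_left cinner_scaleC_right algebra_simps)
  also have "cinner z y = cnj (cinner y z)" by (rule cinner_conj)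
  finally show ?thesis .
qed

lemma complex_polar:
  fixes a b :: complex
  shows "a * cnj b = (of_real ((cmod (a + b))\<^sup>2) - of_real ((cmod (a + (-1) * b))\<^sup>2)
     + \<i> * of_real ((cmod (a + \<i> * b))\<^sup>2) - \<i> * of_real ((cmod (a + (-\<i>) * b))\<^sup>2)) / 4"
  unfolding cmod_power2 by (simp add: complex_eq_iff algebra_simps power2_eq_square)

lemma H_polar:
  fixes y z :: "'a::complex_inner"
  shows "cinner y z = (of_real ((norm (y + 1 *\<^sub>C z))\<^sup>2) - of_real ((norm (y + (-1) *\<^sub>C z))\<^sup>2)
     + \<i> * of_real ((norm (y + \<i> *\<^sub>C z))\<^sup>2) - \<i> * of_real ((norm (y + (-\<i>) *\<^sub>C z))\<^sup>2)) / 4"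
  unfolding norm_add_scaleC_sq by (simp add: algebra_simps)

locale pf =
  fixes g :: "nat \<Rightarrow> 'a::complex_inner"
  assumes pars: "parseval_frame g"
begin

lemma pars_sums: "(\<lambda>n. (cmod (cinner x (g n)))\<^sup>2) sums ((norm x)\<^sup>2)"
  using pars unfolding parseval_frame_def by blast

lemma pars_summable: "summable (\<lambda>n. (cmod (cinner x (g n)))\<^sup>2)"
  using pars_sums by (rule sums_summable)

lemma pol_sums: "(\<lambda>n. cinner y (g n) * cinner (g n) z) sums cinner y z"
proof -
  define a where "a n = cinner y (g n)" for n
  define b where "b n = cinner z (g n)" for n
  have ab: "cinner (y + c *\<^sub>C z) (g n) = a n + c * b n" for c n
    by (simp add: a_def b_def cinner_add_left cinner_scaleC_left)
  have S: "(\<lambda>n. complex_of_real ((cmod (a n + c * b n))\<^sup>2)) sums of_real ((norm (y + c *\<^sub>C z))\<^sup>2)" for c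
    using sums_of_real[OF pars_sums[of "y + c *\<^sub>C z"]] unfolding ab by simp
  have X: "(\<lambda>n. (of_real ((cmod (a n + b n))\<^sup>2) - of_real ((cmod (a n + (-1) * b n))\<^sup>2)
     + \<i> * of_real ((cmod (a n + \<i> * b n))\<^sup>2) - \<i> * of_real ((cmod (a n + (-\<i>) * b n))\<^sup>2)) / 4)
    sums ((of_real ((norm (y + 1 *\<^sub>C z))\<^sup>2) - of_real ((norm (y + (-1) *\<^sub>C z))\<^sup>2)
     + \<i> * of_real ((norm (y + \<i> *\<^sub>C z))\<^sup>2) - \<i> * of_real ((norm (y + (-\<i>) *\<^sub>C z))\<^sup>2)) / 4)"
    using S[of 1] S[of "-1"] S[of "\<i>"] S[of "-\<i>"] by (intro sums_divide sums_diff sums_add sums_mult) simp_all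
  have cb: "cinner (g n) z = cnj (b n)" for n using cinner_conj b_def by metis
  have eq: "(\<lambda>n. cinner y (g n) * cinner (g n) z) = (\<lambda>n. (of_real ((cmod (a n + b n))\<^sup>2) - of_real ((cmod (a n + (-1) * b n))\<^sup>2)
     + \<i> * of_real ((cmod (a n + \<i> * b n))\<^sup>2) - \<i> * of_real ((cmod (a n + (-\<i>) * b n))\<^sup>2)) / 4)"
  proof
    fix n show "cinner y (g n) * cinner (g n) z = (of_real ((cmod (a n + b n))\<^sup>2) - of_real ((cmod (a n + (-1) * b n))\<^sup>2)
     + \<i> * of_real ((cmod (a n + \<i> * b n))\<^sup>2) - \<i> * of_real ((cmod (a n + (-\<i>) * b n))\<^sup>2)) / 4"
      unfolding cb a_def[symmetric] by (rule complex_polar)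
  qed
  show ?thesis unfolding eq H_polar[of y z] by (rule X)
qed

lemma pol_summable: "summable (\<lambda>n. cinner y (g n) * cinner (g n) z)"
  using pol_sums by (rule sums_summable)

lemma pol_abs_summable: "summable (\<lambda>n. norm (cinner y (g n) * cinner (g n) z))"
proof (rule summable_comparison_test)
  show "summable (\<lambda>n. ((cmod (cinner y (g n)))\<^sup>2 + (cmod (cinner z (g n)))\<^sup>2) / 2)"
    by (intro summable_divide summable_add pars_summable)
  show "\<exists>N. \<forall>n\<ge>N. norm (norm (cinner y (g n) * cinner (g n) z)) \<le> ((cmod (cinner y (g n)))\<^sup>2 + (cmod (cinner z (g n)))\<^sup>2) / 2"
  proof (intro exI allI impI)
    fix n
    have e: "cmod (cinner (g n) z) = cmod (cinner z (g n))" by (metis cinner_conj complex_mod_cnj)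
    have "2 * (cmod (cinner y (g n)) * cmod (cinner z (g n))) \<le> (cmod (cinner y (g n)))\<^sup>2 + (cmod (cinner z (g n)))\<^sup>2"
    proof -
      have "0 \<le> (cmod (cinner y (g n)) - cmod (cinner z (g n)))\<^sup>2" by simp
      then show ?thesis by (simp add: power2_diff)
    qed
    then show "norm (norm (cinner y (g n) * cinner (g n) z)) \<le> ((cmod (cinner y (g n)))\<^sup>2 + (cmod (cinner z (g n)))\<^sup>2) / 2"
      by (simp add: norm_mult e)
  qed
qed

end

lemma finite_subseq:
  fixes b :: "nat \<Rightarrow> nat \<Rightarrow> complex"
  assumes "finite J" and "\<And>i j. j \<in> J \<Longrightarrow> cmod (b i j) \<le> C"
  shows "\<exists>\<sigma> L. strict_mono \<sigma> \<and> (\<forall>j\<in>J. (\<lambda>i. b (\<sigma> i) j) \<longlonglongrightarrow> L j)"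
  using assms
proof (induction J rule: finite_induct)
  case empty
  show ?case by (rule exI[of _ id]) (auto simp: strict_mono_def)
next
  case (insert j J)
  then obtain \<sigma> L where s: "strict_mono \<sigma>" and L: "\<forall>j\<in>J. (\<lambda>i. b (\<sigma> i) j) \<longlonglongrightarrow> L j"
    by blast
  have "bounded (range (\<lambda>i. b (\<sigma> i) j))"
    unfolding bounded_iff using insert.prems by auto
  then obtain l r where r: "strict_mono r" and l: "((\<lambda>i. b (\<sigma> i) j) \<circ> r) \<longlonglongrightarrow> l"
    using bounded_imp_convergent_subsequence by blast
  show ?case
  proof (intro exI conjI ballI)
    show "strict_mono (\<sigma> \<circ> r)" using s r by (rule strict_mono_o)
    fix j' assume "j' \<in> insert j J"
    show "(\<lambda>i. b ((\<sigma> \<circ> r) i) j') \<longlonglongrightarrow> (L(j := l)) j'"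
    proof (cases "j' = j")
      case True then show ?thesis using l by (simp add: o_def)
    next
      case False
      then have "j' \<in> J" using \<open>j' \<in> insert j J\<close> by simp
      then have "((\<lambda>i. b (\<sigma> i) j') \<circ> r) \<longlonglongrightarrow> L j'" using L r by (intro LIMSEQ_subseq_LIMSEQ) auto
      then show ?thesis using False by (simp add: o_def)
    qed
  qed
qed

lemma series_CS:
  fixes a c :: "nat \<Rightarrow> real"
  assumes sa: "summable (\<lambda>n. (a n)\<^sup>2)" and sc: "summable (\<lambda>n. (c n)\<^sup>2)"
  shows "summable (\<lambda>n. \<bar>a n\<bar> * \<bar>c n\<bar>)"
    and "(\<Sum>n. \<bar>a n\<bar> * \<bar>c n\<bar>) \<le> sqrt (\<Sum>n. (a n)\<^sup>2) * sqrt (\<Sum>n. (c n)\<^sup>2)"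
proof -
  show sm: "summable (\<lambda>n. \<bar>a n\<bar> * \<bar>c n\<bar>)"
  proof (rule summable_comparison_test)
    show "summable (\<lambda>n. ((a n)\<^sup>2 + (c n)\<^sup>2) / 2)" using sa sc by (intro summable_divide summable_add)
    show "\<exists>N. \<forall>n\<ge>N. norm (\<bar>a n\<bar> * \<bar>c n\<bar>) \<le> ((a n)\<^sup>2 + (c n)\<^sup>2) / 2"
    proof (intro exI allI impI)
      fix n
      have "0 \<le> (\<bar>a n\<bar> - \<bar>c n\<bar>)\<^sup>2" by simp
      then show "norm (\<bar>a n\<bar> * \<bar>c n\<bar>) \<le> ((a n)\<^sup>2 + (c n)\<^sup>2) / 2"
        by (simp add: power2_diff abs_mult)
    qed
  qed
  show "(\<Sum>n. \<bar>a n\<bar> * \<bar>c n\<bar>) \<le> sqrt (\<Sum>n. (a n)\<^sup>2) * sqrt (\<Sum>n. (c n)\<^sup>2)"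
  proof (rule suminf_le_const[OF sm])
    fix N
    have "(\<Sum>n\<in>{..<N}. \<bar>a n\<bar> * \<bar>c n\<bar>) \<le> L2_set a {..<N} * L2_set c {..<N}"
      by (rule L2_set_mult_ineq)
    also have "\<dots> \<le> sqrt (\<Sum>n. (a n)\<^sup>2) * sqrt (\<Sum>n. (c n)\<^sup>2)"
      unfolding L2_set_def
      by (intro mult_mono real_sqrt_le_mono sum_le_suminf sa sc) (auto intro!: suminf_nonneg sa sum_nonneg)
    finally show "sum (\<lambda>n. \<bar>a n\<bar> * \<bar>c n\<bar>) {..<N} \<le> sqrt (\<Sum>n. (a n)\<^sup>2) * sqrt (\<Sum>n. (c n)\<^sup>2)" .
  qed
qed

context pf begin

definition T :: "nat set \<Rightarrow> 'a \<Rightarrow> real" where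
  "T J y = (\<Sum>n. if n \<notin> J then (cmod (cinner y (g n)))\<^sup>2 else 0)"

lemma T_summable: "summable (\<lambda>n. if n \<notin> J then (cmod (cinner y (g n)))\<^sup>2 else 0)"
  by (rule summable_comparison_test[OF _ pars_summable[of y]]) auto

lemma T_le: "T J y \<le> (norm y)\<^sup>2"
  unfolding T_def sums_unique[OF pars_sums[of y]]
  by (rule suminf_le[OF _ T_summable pars_summable]) auto

lemma T_nonneg: "0 \<le> T J y"
  unfolding T_def by (rule suminf_nonneg[OF T_summable]) auto

lemma coef_le: "(cmod (cinner y (g n)))\<^sup>2 \<le> (norm y)\<^sup>2"
proof -
  have "(\<Sum>i\<in>{n}. (cmod (cinner y (g i)))\<^sup>2) \<le> (\<Sum>i. (cmod (cinner y (g i)))\<^sup>2)"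
    by (rule sum_le_suminf[OF pars_summable]) auto
  then show ?thesis using sums_unique[OF pars_sums[of y]] by simp
qed

lemma coef_le_T: "n \<notin> J \<Longrightarrow> (cmod (cinner y (g n)))\<^sup>2 \<le> T J y"
proof -
  assume n: "n \<notin> J"
  have "(\<Sum>i\<in>{n}. if i \<notin> J then (cmod (cinner y (g i)))\<^sup>2 else 0) \<le> T J y"
    unfolding T_def by (rule sum_le_suminf[OF T_summable]) auto
  then show ?thesis using n by simp
qed

lemma tail_bound:
  "cmod (\<Sum>m. if m \<notin> J then cinner y (g m) * cinner (g m) z else 0) \<le> sqrt (T J y) * norm z"
proof -
  define a where "a m = (if m \<notin> J then cmod (cinner y (g m)) else 0)" for m
  define c where "c m = cmod (cinner z (g m))" for m
  have aeq: "(\<lambda>m. (a m)\<^sup>2) = (\<lambda>m. if m \<notin> J then (cmod (cinner y (g m)))\<^sup>2 else 0)"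
    by (auto simp: a_def)
  have sa: "summable (\<lambda>m. (a m)\<^sup>2)" unfolding aeq by (rule T_summable)
  have sc: "summable (\<lambda>m. (c m)\<^sup>2)" using pars_summable[of z] by (simp add: c_def)
  have e: "cmod (cinner (g m) z) = c m" for m unfolding c_def by (metis cinner_conj complex_mod_cnj)
  have nm: "norm (if m \<notin> J then cinner y (g m) * cinner (g m) z else 0) = \<bar>a m\<bar> * \<bar>c m\<bar>" for m
    by (simp add: a_def e norm_mult c_def)
  have "summable (\<lambda>m. norm (if m \<notin> J then cinner y (g m) * cinner (g m) z else 0))"
    unfolding nm by (rule series_CS(1)[OF sa sc])
  then have "cmod (\<Sum>m. if m \<notin> J then cinner y (g m) * cinner (g m) z else 0)
      \<le> (\<Sum>m. norm (if m \<notin> J then cinner y (g m) * cinner (g m) z else 0))"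
    by (rule summable_norm)
  also have "\<dots> \<le> sqrt (\<Sum>n. (a n)\<^sup>2) * sqrt (\<Sum>n. (c n)\<^sup>2)"
    unfolding nm by (rule series_CS(2)[OF sa sc])
  also have "(\<Sum>n. (a n)\<^sup>2) = T J y" unfolding T_def aeq ..
  also have "(\<Sum>n. (c n)\<^sup>2) = (norm z)\<^sup>2" unfolding c_def using sums_unique[OF pars_sums[of z]] by simp
  finally show ?thesis by simp
qed

lemma split_pol:
  assumes "finite J"
  shows "cinner y (g n) = (\<Sum>j\<in>J. cinner y (g j) * cinner (g j) (g n))
     + (\<Sum>m. if m \<notin> J then cinner y (g m) * cinner (g m) (g n) else 0)"
proof -
  have A: "(\<lambda>m. if m \<in> J then cinner y (g m) * cinner (g m) (g n) else 0) sums (\<Sum>j\<in>J. cinner y (g j) * cinner (g j) (g n))"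
    by (rule sums_If_finite_set[OF assms])
  have B: "(\<lambda>m. if m \<notin> J then cinner y (g m) * cinner (g m) (g n) else 0) sums (\<Sum>m. if m \<notin> J then cinner y (g m) * cinner (g m) (g n) else 0)"
    by (rule summable_sums, rule summable_comparison_test[OF _ pol_abs_summable[of y "g n"]]) auto
  have "(\<lambda>m. cinner y (g m) * cinner (g m) (g n)) sums ((\<Sum>j\<in>J. cinner y (g j) * cinner (g j) (g n))
     + (\<Sum>m. if m \<notin> J then cinner y (g m) * cinner (g m) (g n) else 0))"
  proof -
    have "(\<lambda>m. (if m \<in> J then cinner y (g m) * cinner (g m) (g n) else 0) + (if m \<notin> J then cinner y (g m) * cinner (g m) (g n) else 0))
      = (\<lambda>m. cinner y (g m) * cinner (g m) (g n))" by auto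
    then show ?thesis using sums_add[OF A B] by simp
  qed
  with pol_sums[of y "g n"] show ?thesis using sums_unique2 by blast
qed

definition bad :: "nat set \<Rightarrow> bool" where
  "bad J \<longleftrightarrow> (\<exists>y. y \<noteq> 0 \<and> (\<forall>n. n \<notin> J \<longrightarrow> cinner y (g n) = 0))"

lemma frame_imp_notbad:
  assumes "frame_on g (UNIV - J)" shows "\<not> bad J"
proof
  assume "bad J"
  then obtain y where y0: "y \<noteq> 0" and yo: "\<And>n. n \<notin> J \<Longrightarrow> cinner y (g n) = 0"
    unfolding bad_def by blast
  from assms obtain A where A: "0 < A" and
    le: "A * (norm y)\<^sup>2 \<le> (\<Sum>n. if n \<in> UNIV - J then (cmod (cinner y (g n)))\<^sup>2 else 0)"
    unfolding frame_on_def by blast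
  have "(\<lambda>n. if n \<in> UNIV - J then (cmod (cinner y (g n)))\<^sup>2 else 0) = (\<lambda>n. 0)"
    using yo by auto
  then have "(\<Sum>n. if n \<in> UNIV - J then (cmod (cinner y (g n)))\<^sup>2 else 0) = 0"
    by simp
  moreover have "0 < A * (norm y)\<^sup>2" using A y0 by simp
  ultimately show False using le by linarith
qed

end

context pf begin

lemma T_scaleR: "T J (r *\<^sub>R y) = r\<^sup>2 * T J y"
proof -
  have "(\<lambda>n. if n \<notin> J then (cmod (cinner (r *\<^sub>R y) (g n)))\<^sup>2 else 0)
      = (\<lambda>n. r\<^sup>2 * (if n \<notin> J then (cmod (cinner y (g n)))\<^sup>2 else 0))"
    by (auto simp: cinner_scaleR_left norm_mult power_mult_distrib)
  then show ?thesis unfolding T_def using suminf_mult[OF T_summable, of "r\<^sup>2" J y] by simp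
qed

lemma split_norm:
  assumes "finite J"
  shows "(\<Sum>j\<in>J. (cmod (cinner y (g j)))\<^sup>2) + T J y = (norm y)\<^sup>2"
proof -
  have A: "(\<lambda>m. if m \<in> J then (cmod (cinner y (g m)))\<^sup>2 else 0) sums (\<Sum>j\<in>J. (cmod (cinner y (g j)))\<^sup>2)"
    by (rule sums_If_finite_set[OF assms])
  have B: "(\<lambda>m. if m \<notin> J then (cmod (cinner y (g m)))\<^sup>2 else 0) sums T J y"
    unfolding T_def by (rule summable_sums[OF T_summable])
  have "(\<lambda>m. (if m \<in> J then (cmod (cinner y (g m)))\<^sup>2 else 0) + (if m \<notin> J then (cmod (cinner y (g m)))\<^sup>2 else 0))
      = (\<lambda>m. (cmod (cinner y (g m)))\<^sup>2)" by auto
  then have "(\<lambda>m. (cmod (cinner y (g m)))\<^sup>2) sums ((\<Sum>j\<in>J. (cmod (cinner y (g j)))\<^sup>2) + T J y)"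
    using sums_add[OF A B] by simp
  with pars_sums[of y] show ?thesis using sums_unique2 by blast
qed

lemma notbad_imp_frame:
  assumes fin: "finite J" and nb: "\<not> bad J"
  shows "frame_on g (UNIV - J)"
proof -
  have Teq: "(\<Sum>n. if n \<in> UNIV - J then (cmod (cinner x (g n)))\<^sup>2 else 0) = T J x" for x
    unfolding T_def by simp
  have lower: "\<exists>A>0. \<forall>x. A * (norm x)\<^sup>2 \<le> T J x"
  proof (rule ccontr)
    assume "\<not> ?thesis"
    then have "\<forall>i. \<exists>x. T J x < (1 / real (Suc i)) * (norm x)\<^sup>2"
      by (metis not_le of_nat_0_less_iff zero_less_Suc zero_less_divide_1_iff)
    then obtain y where y: "\<And>i. T J (y i) < (1 / real (Suc i)) * (norm (y i))\<^sup>2" by metis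
    have y0: "y i \<noteq> 0" for i
    proof
      assume "y i = 0"
      then show False using y[of i] T_nonneg[of J "y i"] by simp
    qed
    define u where "u i = (1 / norm (y i)) *\<^sub>R y i" for i
    have nu: "norm (u i) = 1" for i using y0[of i] by (simp add: u_def)
    have Tu: "T J (u i) < 1 / real (Suc i)" for i
    proof -
      have "T J (u i) = (1 / norm (y i))\<^sup>2 * T J (y i)" unfolding u_def by (rule T_scaleR)
      also have "\<dots> < (1 / norm (y i))\<^sup>2 * ((1 / real (Suc i)) * (norm (y i))\<^sup>2)"
        using y[of i] y0[of i] by (intro mult_strict_left_mono) auto
      also have "\<dots> = 1 / real (Suc i)" using y0[of i] by (simp add: field_simps)
      finally show ?thesis .
    qed
    define b where "b i j = cinner (u i) (g j)" for i j
    have bb: "cmod (b i j) \<le> 1" for i j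
    proof -
      have "(cmod (b i j))\<^sup>2 \<le> 1\<^sup>2" using coef_le[of "u i" j] nu[of i] by (simp add: b_def)
      then show ?thesis by (rule power2_le_imp_le) simp
    qed
    obtain \<sigma> L where \<sigma>: "strict_mono \<sigma>" and L: "\<And>j. j \<in> J \<Longrightarrow> (\<lambda>i. b (\<sigma> i) j) \<longlonglongrightarrow> L j"
      using finite_subseq[OF fin, of b 1] bb by blast
    define v where "v i = u (\<sigma> i)" for i
    have Tv0: "(\<lambda>i. sqrt (T J (v i))) \<longlonglongrightarrow> 0"
    proof -
      have "(\<lambda>i. 1 / real (Suc i)) \<longlonglongrightarrow> 0" by (rule LIMSEQ_Suc[OF lim_const_over_n])
      then have h0: "(\<lambda>i. 1 / real (Suc (\<sigma> i))) \<longlonglongrightarrow> 0"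
        using LIMSEQ_subseq_LIMSEQ[OF _ \<sigma>] by (simp add: o_def)
      have e1: "\<forall>\<^sub>F i in sequentially. T J (v i) \<le> 1 / real (Suc (\<sigma> i))"
        by (intro always_eventually allI) (metis Tu less_imp_le v_def)
      have e0: "\<forall>\<^sub>F i in sequentially. (0::real) \<le> T J (v i)"
        by (intro always_eventually allI) (rule T_nonneg)
      have "(\<lambda>i. T J (v i)) \<longlonglongrightarrow> 0"
        by (rule tendsto_sandwich[OF e0 e1 tendsto_const h0])
      then have "(\<lambda>i. sqrt (T J (v i))) \<longlonglongrightarrow> sqrt 0" by (rule tendsto_real_sqrt)
      then show ?thesis by simp
    qed
    define yy where "yy = (\<Sum>j\<in>J. L j *\<^sub>C g j)"
    have yyg: "cinner yy (g n) = (\<Sum>j\<in>J. L j * cinner (g j) (g n))" for n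
      unfolding yy_def by (simp add: cinner_sum_left cinner_scaleC_left)
    define R where "R i n = (\<Sum>m. if m \<notin> J then cinner (v i) (g m) * cinner (g m) (g n) else 0)" for i n
    have R0: "(\<lambda>i. R i n) \<longlonglongrightarrow> 0" for n
    proof (rule Lim_null_comparison)
      show "\<forall>\<^sub>F i in sequentially. norm (R i n) \<le> sqrt (T J (v i)) * norm (g n)"
        unfolding R_def using tail_bound by simp
      show "(\<lambda>i. sqrt (T J (v i)) * norm (g n)) \<longlonglongrightarrow> 0"
        by (rule tendsto_mult_left_zero[OF Tv0])
    qed
    have sp: "(\<Sum>j\<in>J. b (\<sigma> i) j * cinner (g j) (g n)) = cinner (v i) (g n) - R i n" for i n
    proof -
      have "cinner (v i) (g n) = (\<Sum>j\<in>J. b (\<sigma> i) j * cinner (g j) (g n)) + R i n"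
        unfolding R_def b_def v_def by (rule split_pol[OF fin])
      then show ?thesis by (simp add: algebra_simps)
    qed
    have lim1: "(\<lambda>i. cinner (v i) (g n) - R i n) \<longlonglongrightarrow> cinner yy (g n)" for n
    proof -
      have "(\<lambda>i. \<Sum>j\<in>J. b (\<sigma> i) j * cinner (g j) (g n)) \<longlonglongrightarrow> (\<Sum>j\<in>J. L j * cinner (g j) (g n))"
        by (intro tendsto_sum tendsto_mult_right L)
      then show ?thesis unfolding sp yyg .
    qed
    have out: "cinner yy (g n) = 0" if n: "n \<notin> J" for n
    proof -
      have "(\<lambda>i. cinner (v i) (g n)) \<longlonglongrightarrow> 0"
      proof (rule Lim_null_comparison)
        show "\<forall>\<^sub>F i in sequentially. norm (cinner (v i) (g n)) \<le> sqrt (T J (v i))"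
          by (intro always_eventually allI real_le_rsqrt coef_le_T[OF n])
        show "(\<lambda>i. sqrt (T J (v i))) \<longlonglongrightarrow> 0" by (rule Tv0)
      qed
      then have "(\<lambda>i. cinner (v i) (g n) - R i n) \<longlonglongrightarrow> 0 - 0" by (rule tendsto_diff[OF _ R0])
      from LIMSEQ_unique[OF lim1[of n] this] show ?thesis by simp
    qed
    have inn: "cinner yy (g n) = L n" if n: "n \<in> J" for n
    proof -
      have "(\<lambda>i. b (\<sigma> i) n) \<longlonglongrightarrow> L n" by (rule L[OF n])
      then have "(\<lambda>i. cinner (v i) (g n)) \<longlonglongrightarrow> L n" unfolding b_def v_def .
      then have "(\<lambda>i. cinner (v i) (g n) - R i n) \<longlonglongrightarrow> L n - 0" by (rule tendsto_diff[OF _ R0])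
      from LIMSEQ_unique[OF lim1[of n] this] show ?thesis by simp
    qed
    have "yy \<noteq> 0"
    proof
      assume yy0: "yy = 0"
      then have Lz: "L j = 0" if "j \<in> J" for j using inn[OF that] by simp
      have "(\<lambda>i. \<Sum>j\<in>J. (cmod (b (\<sigma> i) j))\<^sup>2) \<longlonglongrightarrow> (\<Sum>j\<in>J. (cmod (L j))\<^sup>2)"
        by (intro tendsto_sum tendsto_power tendsto_norm L)
      moreover have "(\<Sum>j\<in>J. (cmod (L j))\<^sup>2) = 0" using Lz by simp
      ultimately have l0: "(\<lambda>i. \<Sum>j\<in>J. (cmod (b (\<sigma> i) j))\<^sup>2) \<longlonglongrightarrow> 0" by simp
      have eq: "(\<Sum>j\<in>J. (cmod (b (\<sigma> i) j))\<^sup>2) = 1 - T J (v i)" for i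
      proof -
        have "(\<Sum>j\<in>J. (cmod (cinner (v i) (g j)))\<^sup>2) + T J (v i) = (norm (v i))\<^sup>2"
          by (rule split_norm[OF fin])
        then show ?thesis using nu[of "\<sigma> i"] unfolding v_def b_def by simp
      qed
      have "(\<lambda>i. (sqrt (T J (v i)))\<^sup>2) \<longlonglongrightarrow> 0\<^sup>2" by (intro tendsto_power Tv0)
      then have "(\<lambda>i. T J (v i)) \<longlonglongrightarrow> 0" by (simp add: T_nonneg)
      then have "(\<lambda>i. 1 - T J (v i)) \<longlonglongrightarrow> 1 - 0" by (intro tendsto_diff tendsto_const)
      then have "(\<lambda>i. \<Sum>j\<in>J. (cmod (b (\<sigma> i) j))\<^sup>2) \<longlonglongrightarrow> 1" unfolding eq by simp
      from LIMSEQ_unique[OF l0 this] show False by simp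
    qed
    then have "bad J" unfolding bad_def using out by blast
    then show False using nb by simp
  qed
  then obtain A where A: "0 < A" "\<And>x. A * (norm x)\<^sup>2 \<le> T J x" by blast
  show ?thesis unfolding frame_on_def Teq
  proof (intro conjI allI)
    fix x show "summable (\<lambda>n. if n \<in> UNIV - J then (cmod (cinner x (g n)))\<^sup>2 else 0)"
      using T_summable by simp
  next
    show "\<exists>A B. 0 < A \<and> (\<forall>x. A * (norm x)\<^sup>2 \<le> T J x \<and> T J x \<le> B * (norm x)\<^sup>2)"
      by (rule exI[of _ A], rule exI[of _ 1]) (use A T_le in auto)
  qed
qed

lemma frame_iff_notbad: "finite J \<Longrightarrow> frame_on g (UNIV - J) \<longleftrightarrow> \<not> bad J"
  using frame_imp_notbad notbad_imp_frame by blast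

end

context pf begin

definition q :: "nat \<Rightarrow> nat \<Rightarrow> complex" where
  "q j n = (if j = n then 1 else 0) - cinner (g j) (g n)"

definition lc :: "nat set \<Rightarrow> (nat \<Rightarrow> complex) \<Rightarrow> nat \<Rightarrow> complex" where
  "lc K c = (\<lambda>n. \<Sum>j\<in>K. c j * q j n)"

definition insp :: "nat set \<Rightarrow> (nat \<Rightarrow> complex) \<Rightarrow> bool" where
  "insp K u \<longleftrightarrow> (\<exists>c. u = lc K c)"

definition indep :: "nat set \<Rightarrow> bool" where
  "indep K \<longleftrightarrow> (\<forall>c. lc K c = (\<lambda>n. 0) \<longrightarrow> (\<forall>j\<in>K. c j = 0))"

definition ipv :: "(nat \<Rightarrow> complex) \<Rightarrow> (nat \<Rightarrow> complex) \<Rightarrow> complex" where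
  "ipv v w = (\<Sum>n. v n * cnj (w n))"

lemma q_cnj: "cnj (q j n) = q n j"
  unfolding q_def by (simp add: cinner_conj[of "g n" "g j"])

lemma q_gram: "(\<lambda>m. q j m * q m n) sums q j n"
proof -
  have e: "q j m * q m n = (if m = j then (if j = n then 1 else 0) - cinner (g j) (g n) else 0)
     - (if m = n then cinner (g j) (g n) else 0) + cinner (g j) (g m) * cinner (g m) (g n)" for m
    unfolding q_def by (auto simp: algebra_simps)
  have "(\<lambda>m. (if m = j then (if j = n then 1 else 0) - cinner (g j) (g n) else 0)
     - (if m = n then cinner (g j) (g n) else 0) + cinner (g j) (g m) * cinner (g m) (g n))
     sums (((if j = n then 1 else 0) - cinner (g j) (g n)) - cinner (g j) (g n) + cinner (g j) (g n))"
    by (intro sums_add sums_diff pol_sums sums_single[of j "\<lambda>_. (if j = n then 1 else 0) - cinner (g j) (g n)", simplified]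
        sums_single[of n "\<lambda>_. cinner (g j) (g n)", simplified])
  then show ?thesis unfolding e by (simp add: q_def)
qed

lemma repr:
  assumes "finite K" "insp K u"
  shows "(\<lambda>n. u n * cnj (q l n)) sums u l"
proof -
  obtain c where u: "u = lc K c" using assms(2) unfolding insp_def by blast
  have "(\<lambda>n. \<Sum>j\<in>K. c j * (q j n * q n l)) sums (\<Sum>j\<in>K. c j * q j l)"
    by (intro sums_sum sums_mult q_gram)
  then show ?thesis unfolding u lc_def q_cnj by (simp add: sum_distrib_right mult.assoc)
qed

lemma ip_sums:
  assumes "finite K'" "insp K' v" "finite K"
  shows "(\<lambda>n. v n * cnj (lc K d n)) sums (\<Sum>k\<in>K. cnj (d k) * v k)"
proof -
  have "(\<lambda>n. \<Sum>k\<in>K. cnj (d k) * (v n * cnj (q k n))) sums (\<Sum>k\<in>K. cnj (d k) * v k)"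
    by (intro sums_sum sums_mult repr[OF assms(1,2)])
  then show ?thesis unfolding lc_def by (simp add: sum_distrib_left algebra_simps)
qed

lemma ipv_formula:
  assumes "finite K'" "insp K' v" "finite K"
  shows "ipv v (lc K d) = (\<Sum>k\<in>K. cnj (d k) * v k)"
  unfolding ipv_def using ip_sums[OF assms] by (rule sums_unique[symmetric])

lemma ipv_q: assumes "finite K" "insp K v" shows "ipv v (q l) = v l"
  unfolding ipv_def using sums_unique[OF repr[OF assms, of l]] by (rule sym)

lemma ipv_cnj:
  assumes "finite K" "insp K v" "finite K'" "insp K' w"
  shows "ipv w v = cnj (ipv v w)"
proof -
  obtain d where w: "w = lc K' d" using assms(4) unfolding insp_def by blast
  have "(\<lambda>n. v n * cnj (w n)) sums ipv v w"
    unfolding ipv_def w using ip_sums[OF assms(1,2,3)] by (rule sums_summable[THEN summable_sums])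
  then have "(\<lambda>n. cnj (v n * cnj (w n))) sums cnj (ipv v w)" by (simp only: sums_cnj)
  then have "(\<lambda>n. w n * cnj (v n)) sums cnj (ipv v w)" by (simp add: mult.commute)
  then show ?thesis unfolding ipv_def by (rule sums_unique[symmetric])
qed

lemma insp_q: assumes "j \<in> K" "finite K" shows "insp K (q j)"
proof -
  have "lc K (\<lambda>i. if i = j then 1 else 0) = q j"
  proof
    fix n
    have "lc K (\<lambda>i. if i = j then 1 else 0) n = (\<Sum>i\<in>K. if i = j then q i n else 0)"
      unfolding lc_def by (rule sum.cong) auto
    also have "\<dots> = q j n" using assms by simp
    finally show "lc K (\<lambda>i. if i = j then 1 else 0) n = q j n" .
  qed
  then show ?thesis unfolding insp_def by (intro exI[of _ "\<lambda>i. if i = j then 1 else 0"]) (rule sym)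
qed

lemma insp_mono: assumes "K \<subseteq> K'" "finite K'" "insp K u" shows "insp K' u"
proof -
  obtain c where u: "u = lc K c" using assms(3) unfolding insp_def by blast
  have "lc K' (\<lambda>j. if j \<in> K then c j else 0) = lc K c"
    unfolding lc_def using assms(1,2)
    by (auto intro!: ext sum.mono_neutral_cong_right simp: if_distrib)
  then show ?thesis unfolding insp_def u by (intro exI[of _ "\<lambda>j. if j \<in> K then c j else 0"]) (rule sym)
qed

lemma insp_comb:
  assumes "finite I" "\<And>i. i \<in> I \<Longrightarrow> insp K (u i)"
  shows "insp K (\<lambda>n. \<Sum>i\<in>I. a i * u i n)"
proof -
  have "\<forall>i\<in>I. \<exists>c. u i = lc K c" using assms(2) unfolding insp_def by blast
  then obtain C where C: "\<And>i. i \<in> I \<Longrightarrow> u i = lc K (C i)" by (metis bchoice)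
  have "(\<lambda>n. \<Sum>i\<in>I. a i * u i n) = lc K (\<lambda>j. \<Sum>i\<in>I. a i * C i j)"
  proof
    fix n
    have "(\<Sum>i\<in>I. a i * u i n) = (\<Sum>i\<in>I. \<Sum>j\<in>K. a i * (C i j * q j n))"
      using C by (auto simp: lc_def sum_distrib_left intro!: sum.cong)
    also have "\<dots> = (\<Sum>j\<in>K. \<Sum>i\<in>I. a i * (C i j * q j n))" by (rule sum.swap)
    also have "\<dots> = lc K (\<lambda>j. \<Sum>i\<in>I. a i * C i j) n"
      by (simp add: lc_def sum_distrib_right mult.assoc)
    finally show "(\<Sum>i\<in>I. a i * u i n) = lc K (\<lambda>j. \<Sum>i\<in>I. a i * C i j) n" .
  qed
  then show ?thesis unfolding insp_def by blast
qed

lemma insp_diff: assumes "insp K u" "insp K v" shows "insp K (\<lambda>n. u n - v n)"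
proof -
  obtain c d where "u = lc K c" "v = lc K d" using assms unfolding insp_def by blast
  then have "(\<lambda>n. u n - v n) = lc K (\<lambda>j. c j - d j)"
    by (simp add: lc_def fun_eq_iff sum_subtractf algebra_simps)
  then show ?thesis unfolding insp_def by blast
qed

lemma insp_scale: assumes "insp K u" shows "insp K (\<lambda>n. a * u n)"
proof -
  obtain c where "u = lc K c" using assms unfolding insp_def by blast
  then have "(\<lambda>n. a * u n) = lc K (\<lambda>j. a * c j)"
    by (simp add: lc_def fun_eq_iff sum_distrib_left mult.assoc)
  then show ?thesis unfolding insp_def by blast
qed

lemma indep_insert:
  assumes "indep (insert l K)" "l \<notin> K" "finite K"
  shows "\<not> insp K (q l)"
proof
  assume "insp K (q l)"
  then obtain c where c: "q l = lc K c" unfolding insp_def by blast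
  have "lc (insert l K) (c(l := -1)) = (\<lambda>n. 0)"
  proof
    fix n
    have "lc (insert l K) (c(l := -1)) n = (c(l := -1)) l * q l n + (\<Sum>j\<in>K. (c(l := -1)) j * q j n)"
      unfolding lc_def by (rule sum.insert[OF assms(3) assms(2)])
    also have "(\<Sum>j\<in>K. (c(l := -1)) j * q j n) = (\<Sum>j\<in>K. c j * q j n)"
      using assms(2) by (intro sum.cong) auto
    also have "(\<Sum>j\<in>K. c j * q j n) = q l n" using c unfolding lc_def by (simp add: fun_eq_iff)
    finally have X: "lc (insert l K) (c(l := -1)) n = (c(l := -1)) l * q l n + q l n" .
    have "(c(l := -1)) l * q l n + q l n = 0" by simp
    with X show "lc (insert l K) (c(l := -1)) n = 0" by (rule trans)
  qed
  then have "\<forall>j\<in>insert l K. (c(l := -1)) j = 0" using assms(1)[unfolded indep_def, rule_format] by blast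
  then have "(c(l := -1)) l = 0" by blast
  then show False by simp
qed

lemma indep_subset: "indep K' \<Longrightarrow> K \<subseteq> K' \<Longrightarrow> finite K' \<Longrightarrow> indep K"
  unfolding indep_def
proof (intro allI impI ballI)
  fix c j assume I: "\<forall>c. lc K' c = (\<lambda>n. 0) \<longrightarrow> (\<forall>j\<in>K'. c j = 0)" and s: "K \<subseteq> K'"
    and f: "finite K'" and z: "lc K c = (\<lambda>n. 0)" and j: "j \<in> K"
  have "lc K' (\<lambda>j. if j \<in> K then c j else 0) = lc K c"
    unfolding lc_def using s f by (auto intro!: ext sum.mono_neutral_cong_right simp: if_distrib)
  then have "lc K' (\<lambda>j. if j \<in> K then c j else 0) = (\<lambda>n. 0)" using z by simp
  then have "\<forall>j\<in>K'. (if j \<in> K then c j else 0) = 0" using I[rule_format] by blast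
  then have "(if j \<in> K then c j else 0) = 0" using j s by blast
  then show "c j = 0" using j by simp
qed

end

context pf begin

lemma ipv_self:
  assumes "finite K" "insp K w"
  shows "(\<lambda>n. (cmod (w n))\<^sup>2) sums Re (ipv w w)" "Im (ipv w w) = 0"
proof -
  obtain d where w: "w = lc K d" using assms(2) unfolding insp_def by blast
  have s: "(\<lambda>n. w n * cnj (w n)) sums ipv w w"
    unfolding ipv_def using ip_sums[OF assms(1,2) assms(1), of d] w by (metis sums_summable summable_sums)
  have e: "w n * cnj (w n) = of_real ((cmod (w n))\<^sup>2)" for n by (rule complex_norm_square[symmetric])
  have "(\<lambda>n. complex_of_real ((cmod (w n))\<^sup>2)) sums ipv w w" using s unfolding e .
  then have "(\<lambda>n. Re (complex_of_real ((cmod (w n))\<^sup>2))) sums Re (ipv w w)"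
    and "(\<lambda>n. Im (complex_of_real ((cmod (w n))\<^sup>2))) sums Im (ipv w w)"
    using sums_Re sums_Im by blast+
  then have a: "(\<lambda>n. (cmod (w n))\<^sup>2) sums Re (ipv w w)" and b: "(\<lambda>n. 0) sums Im (ipv w w)"
    by simp_all
  show "(\<lambda>n. (cmod (w n))\<^sup>2) sums Re (ipv w w)" by (rule a)
  from sums_unique2[OF b sums_zero] show "Im (ipv w w) = 0" .
qed

lemma gs:
  assumes "finite K" "indep K"
  shows "\<exists>u. (\<forall>i<card K. insp K (u i)) \<and>
    (\<forall>i<card K. \<forall>i'<card K. ipv (u i) (u i') = (if i = i' then 1 else 0)) \<and>
    (\<forall>j\<in>K. \<exists>\<beta>. q j = (\<lambda>n. \<Sum>i<card K. \<beta> i * u i n))"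
  using assms
proof (induction K rule: finite_induct)
  case empty then show ?case by simp
next
  case (insert l K)
  define K' where "K' = insert l K"
  have fK': "finite K'" using insert by (simp add: K'_def)
  have iK: "indep K" using indep_subset[OF insert.prems, of K] insert(1) by auto
  obtain u where u_in: "\<And>i. i < card K \<Longrightarrow> insp K (u i)"
    and u_on: "\<And>i i'. i < card K \<Longrightarrow> i' < card K \<Longrightarrow> ipv (u i) (u i') = (if i = i' then 1 else 0)"
    and u_sp: "\<And>j. j \<in> K \<Longrightarrow> \<exists>\<beta>. q j = (\<lambda>n. \<Sum>i<card K. \<beta> i * u i n)"
    using insert.IH[OF iK] by blast
  define r where "r = card K"
  have cK': "card K' = Suc r" using insert by (simp add: K'_def r_def)
  have u_in': "insp K' (u i)" if "i < r" for i
    using insp_mono[OF _ fK' u_in] that insert(1) by (auto simp: K'_def r_def)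
  define \<rho> where "\<rho> i = ipv (q l) (u i)" for i
  define w where "w = (\<lambda>n. q l n - (\<Sum>i<r. \<rho> i * u i n))"
  have w_in: "insp K' w" unfolding w_def
    by (intro insp_diff insp_comb insp_q u_in') (use fK' in \<open>auto simp: K'_def\<close>)
  have w_ne: "w \<noteq> (\<lambda>n. 0)"
  proof
    assume "w = (\<lambda>n. 0)"
    then have "q l = (\<lambda>n. \<Sum>i<r. \<rho> i * u i n)" unfolding w_def by (auto simp: fun_eq_iff)
    moreover have "insp K (\<lambda>n. \<Sum>i<r. \<rho> i * u i n)" by (intro insp_comb u_in) (auto simp: r_def)
    ultimately show False using indep_insert[OF insert.prems insert(2,1)] by simp
  qed
  have lin: "ipv (\<lambda>n. a * v n - (\<Sum>i<r. c i * u i n)) z = a * ipv v z - (\<Sum>i<r. c i * ipv (u i) z)"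
    if v_in: "insp K' v" and z_in: "insp K' z" for a v c z
  proof -
    obtain d where z: "z = lc K' d" using z_in unfolding insp_def by blast
    have in1: "insp K' (\<lambda>n. a * v n - (\<Sum>i<r. c i * u i n))"
      by (intro insp_diff insp_scale insp_comb u_in' v_in) auto
    show ?thesis unfolding z
      using ipv_formula[OF fK' in1 fK'] ipv_formula[OF fK' v_in fK'] ipv_formula[OF fK' u_in' fK']
      by (simp add: sum_distrib_left sum_subtractf algebra_simps sum.swap[of _ "{..<r}"])
  qed
  have w_orth: "ipv w (u i) = 0" if "i < r" for i
  proof -
    have "ipv w (u i) = 1 * ipv (q l) (u i) - (\<Sum>i'<r. \<rho> i' * ipv (u i') (u i))"
      unfolding w_def using lin[of "q l" "u i" 1 \<rho>] insp_q[of l K'] fK' u_in'[OF that] by (simp add: K'_def)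
    also have "(\<Sum>i'<r. \<rho> i' * ipv (u i') (u i)) = \<rho> i"
    proof -
      have "(\<Sum>i'<r. \<rho> i' * ipv (u i') (u i)) = (\<Sum>i'<r. if i' = i then \<rho> i' else 0)"
        by (rule sum.cong) (use u_on that in \<open>auto simp: r_def\<close>)
      also have "\<dots> = \<rho> i" using that by simp
      finally show ?thesis .
    qed
    finally show ?thesis by (simp add: \<rho>_def)
  qed
  define s where "s = Re (ipv w w)"
  have s_sums: "(\<lambda>n. (cmod (w n))\<^sup>2) sums s" and sIm: "Im (ipv w w) = 0"
    using ipv_self[OF fK' w_in] by (simp_all add: s_def)
  have s_pos: "0 < s"
  proof -
    obtain n0 where n0: "w n0 \<noteq> 0" using w_ne by (auto simp: fun_eq_iff)
    have "(\<Sum>i\<in>{n0}. (cmod (w i))\<^sup>2) \<le> s"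
      using sum_le_suminf[OF sums_summable[OF s_sums], of "{n0}"] sums_unique[OF s_sums] by simp
    then have "(cmod (w n0))\<^sup>2 \<le> s" by simp
    moreover have "0 < (cmod (w n0))\<^sup>2" using n0 by simp
    ultimately show ?thesis by linarith
  qed
  have ww: "ipv w w = of_real s" using sIm by (simp add: s_def complex_eq_iff)
  define t where "t = complex_of_real (1 / sqrt s)"
  define u' where "u' = u(r := (\<lambda>n. t * w n))"
  have u'_in: "insp K' (u' i)" if "i < Suc r" for i
    using that u_in' insp_scale[OF w_in] by (auto simp: u'_def less_Suc_eq)
  have tw_in: "insp K' (\<lambda>n. t * w n)" using insp_scale[OF w_in] .
  have ip_tw_u: "ipv (\<lambda>n. t * w n) (u i) = 0" if "i < r" for i
  proof -
    have "ipv (\<lambda>n. t * w n - (\<Sum>i<r. 0 * u i n)) (u i) = t * ipv w (u i) - (\<Sum>i'<r. 0 * ipv (u i') (u i))"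
      by (rule lin[OF w_in u_in'[OF that]])
    then show ?thesis using w_orth[OF that] by simp
  qed
  have ip_tw_tw: "ipv (\<lambda>n. t * w n) (\<lambda>n. t * w n) = 1"
  proof -
    have a: "ipv (\<lambda>n. t * w n - (\<Sum>i<r. 0 * u i n)) (\<lambda>n. t * w n) = t * ipv w (\<lambda>n. t * w n) - (\<Sum>i'<r. 0 * ipv (u i') (\<lambda>n. t * w n))"
      by (rule lin[OF w_in tw_in])
    have b: "ipv w (\<lambda>n. t * w n) = cnj (ipv (\<lambda>n. t * w n) w)" by (rule ipv_cnj[OF fK' tw_in fK' w_in])
    have c: "ipv (\<lambda>n. t * w n - (\<Sum>i<r. 0 * u i n)) w = t * ipv w w - (\<Sum>i'<r. 0 * ipv (u i') w)"
      by (rule lin[OF w_in w_in])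
    have "ipv (\<lambda>n. t * w n) (\<lambda>n. t * w n) = t * cnj (t * ipv w w)" using a b c by simp
    also have "\<dots> = of_real ((1 / sqrt s) * (1 / sqrt s) * s)"
      unfolding ww t_def complex_cnj_mult complex_cnj_complex_of_real of_real_mult by (simp only: mult.assoc)
    also have "\<dots> = 1" using s_pos by (simp add: field_simps)
    finally show ?thesis .
  qed
  show ?case
  proof (intro exI[of _ u'] conjI allI impI ballI)
    fix i assume "i < card (insert l K)"
    then show "insp (insert l K) (u' i)" using u'_in cK' by (simp add: K'_def)
  next
    fix i i' assume i: "i < card (insert l K)" and i': "i' < card (insert l K)"
    then have i: "i < Suc r" and i': "i' < Suc r" using cK' by (auto simp: K'_def)
    show "ipv (u' i) (u' i') = (if i = i' then 1 else 0)"
    proof (cases "i = r")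
      case True
      show ?thesis
      proof (cases "i' = r")
        case True then show ?thesis using \<open>i = r\<close> ip_tw_tw by (simp add: u'_def)
      next
        case False then have "i' < r" using i' by simp
        then show ?thesis using \<open>i = r\<close> ip_tw_u False by (simp add: u'_def)
      qed
    next
      case False then have ir: "i < r" using i by simp
      show ?thesis
      proof (cases "i' = r")
        case True
        have "ipv (u i) (\<lambda>n. t * w n) = cnj (ipv (\<lambda>n. t * w n) (u i))"
          by (rule ipv_cnj[OF fK' tw_in fK' u_in'[OF ir]])
        then show ?thesis using True ir ip_tw_u[OF ir] by (simp add: u'_def)
      next
        case False then have "i' < r" using i' by simp
        then show ?thesis using ir u_on \<open>i \<noteq> r\<close> False by (simp add: u'_def r_def)
      qed
    qed
  next
    fix j assume j: "j \<in> insert l K"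
    show "\<exists>\<beta>. q j = (\<lambda>n. \<Sum>i<card (insert l K). \<beta> i * u' i n)"
    proof (cases "j = l")
      case True
      have ql: "q l = (\<lambda>n. \<Sum>i<Suc r. (\<rho>(r := complex_of_real (sqrt s))) i * u' i n)"
      proof
        fix n
        have "(\<Sum>i<Suc r. (\<rho>(r := complex_of_real (sqrt s))) i * u' i n) = (\<Sum>i<r. \<rho> i * u i n) + of_real (sqrt s) * (t * w n)"
          by (simp add: u'_def)
        also have "of_real (sqrt s) * (t * w n) = w n" using s_pos by (simp add: t_def)
        finally show "q l n = (\<Sum>i<Suc r. (\<rho>(r := complex_of_real (sqrt s))) i * u' i n)" by (simp add: w_def)
      qed
      have ce: "card (insert l K) = Suc r" using cK' by (simp add: K'_def)
      show ?thesis unfolding True ce by (rule exI, rule ql)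
    next
      case False
      then have "j \<in> K" using j by simp
      then obtain \<beta> where b: "q j = (\<lambda>n. \<Sum>i<r. \<beta> i * u i n)" using u_sp r_def by blast
      have qj: "q j = (\<lambda>n. \<Sum>i<Suc r. (\<beta>(r := 0)) i * u' i n)"
        unfolding b by (auto simp: u'_def intro!: ext sum.cong)
      have ce: "card (insert l K) = Suc r" using cK' by (simp add: K'_def)
      show ?thesis unfolding ce by (rule exI, rule qj)
    qed
  qed
qed

end

context pf begin

lemma trace:
  assumes fin: "finite K" and ind: "indep K" and all: "\<And>l. insp K (q l)"
  shows "(\<lambda>l. q l l) sums of_nat (card K)"
proof -
  obtain u where u_in: "\<And>i. i < card K \<Longrightarrow> insp K (u i)"
    and u_on: "\<And>i i'. i < card K \<Longrightarrow> i' < card K \<Longrightarrow> ipv (u i) (u i') = (if i = i' then 1 else 0)"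
    and u_sp: "\<And>j. j \<in> K \<Longrightarrow> \<exists>\<beta>. q j = (\<lambda>n. \<Sum>i<card K. \<beta> i * u i n)"
    using gs[OF fin ind] by blast
  define r where "r = card K"
  have "\<forall>j\<in>K. \<exists>\<beta>. q j = (\<lambda>n. \<Sum>i<r. \<beta> i * u i n)" using u_sp by (simp add: r_def)
  then obtain B where B: "\<And>j. j \<in> K \<Longrightarrow> q j = (\<lambda>n. \<Sum>i<r. B j i * u i n)" by (metis bchoice)
  have qll: "q l l = (\<Sum>i<r. u i l * cnj (u i l))" for l
  proof -
    obtain c where c: "q l = lc K c" using all[of l] unfolding insp_def by blast
    define \<gamma> where "\<gamma> i = (\<Sum>j\<in>K. c j * B j i)" for i
    have qg: "q l n = (\<Sum>i<r. \<gamma> i * u i n)" for n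
    proof -
      have "q l n = (\<Sum>j\<in>K. c j * q j n)" using c unfolding lc_def by (simp add: fun_eq_iff)
      also have "\<dots> = (\<Sum>j\<in>K. \<Sum>i<r. c j * (B j i * u i n))"
        using B by (auto simp: sum_distrib_left intro!: sum.cong)
      also have "\<dots> = (\<Sum>i<r. \<Sum>j\<in>K. c j * (B j i * u i n))" by (rule sum.swap)
      also have "\<dots> = (\<Sum>i<r. \<gamma> i * u i n)" by (simp add: \<gamma>_def sum_distrib_right mult.assoc)
      finally show ?thesis .
    qed
    have ip: "ipv (q l) (u i0) = \<gamma> i0" if i0: "i0 < r" for i0
    proof -
      obtain d where d: "u i0 = lc K d" using u_in[of i0] i0 unfolding insp_def r_def by blast
      have "ipv (q l) (u i0) = (\<Sum>k\<in>K. cnj (d k) * q l k)"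
        unfolding d by (rule ipv_formula[OF fin all fin])
      also have "\<dots> = (\<Sum>k\<in>K. \<Sum>i<r. \<gamma> i * (cnj (d k) * u i k))"
        unfolding qg by (simp add: sum_distrib_left mult.left_commute)
      also have "\<dots> = (\<Sum>i<r. \<gamma> i * (\<Sum>k\<in>K. cnj (d k) * u i k))"
        by (subst sum.swap) (simp add: sum_distrib_left)
      also have "\<dots> = (\<Sum>i<r. \<gamma> i * ipv (u i) (u i0))"
      proof (rule sum.cong[OF refl])
        fix i assume "i \<in> {..<r}"
        then have "ipv (u i) (lc K d) = (\<Sum>k\<in>K. cnj (d k) * u i k)"
          by (intro ipv_formula[OF fin u_in fin]) (simp add: r_def)
        then show "\<gamma> i * (\<Sum>k\<in>K. cnj (d k) * u i k) = \<gamma> i * ipv (u i) (u i0)" unfolding d by simp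
      qed
      also have "\<dots> = (\<Sum>i<r. if i = i0 then \<gamma> i else 0)"
        by (rule sum.cong[OF refl]) (use u_on i0 in \<open>auto simp: r_def\<close>)
      also have "\<dots> = \<gamma> i0" using i0 by simp
      finally show ?thesis .
    qed
    have cj: "\<gamma> i = cnj (u i l)" if i: "i < r" for i
    proof -
      have "ipv (q l) (u i) = cnj (ipv (u i) (q l))"
        by (rule ipv_cnj[OF fin u_in fin all]) (use i in \<open>simp add: r_def\<close>)
      also have "ipv (u i) (q l) = u i l" by (rule ipv_q[OF fin u_in]) (use i in \<open>simp add: r_def\<close>)
      finally show ?thesis using ip[OF i] by simp
    qed
    have "q l l = (\<Sum>i<r. \<gamma> i * u i l)" by (rule qg)
    also have "\<dots> = (\<Sum>i<r. u i l * cnj (u i l))" using cj by (auto intro!: sum.cong simp: mult.commute)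
    finally show ?thesis .
  qed
  have each: "(\<lambda>l. u i l * cnj (u i l)) sums 1" if i: "i < r" for i
  proof -
    obtain d where d: "u i = lc K d" using u_in[of i] i unfolding insp_def r_def by blast
    have "(\<lambda>n. u i n * cnj (lc K d n)) sums (\<Sum>k\<in>K. cnj (d k) * u i k)"
      by (rule ip_sums[OF fin u_in fin]) (use i in \<open>simp add: r_def\<close>)
    then have "(\<lambda>n. u i n * cnj (u i n)) sums ipv (u i) (u i)"
      unfolding ipv_def d[symmetric] by (metis sums_unique)
    then show ?thesis using u_on[of i i] i by (simp add: r_def)
  qed
  have "(\<lambda>l. \<Sum>i<r. u i l * cnj (u i l)) sums (\<Sum>i<r. (1::complex))"
    by (rule sums_sum) (use each in simp)
  then show ?thesis unfolding qll[symmetric] by (simp add: r_def)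
qed

lemma lc_eq: assumes fJ: "finite J"
  shows "lc J c n = (if n \<in> J then c n else 0) - (\<Sum>j\<in>J. c j * cinner (g j) (g n))"
proof -
  have "lc J c n = (\<Sum>j\<in>J. (if j = n then c j else 0) - c j * cinner (g j) (g n))"
    unfolding lc_def q_def by (rule sum.cong) (auto simp: algebra_simps)
  also have "\<dots> = (\<Sum>j\<in>J. if j = n then c j else 0) - (\<Sum>j\<in>J. c j * cinner (g j) (g n))"
    by (rule sum_subtractf)
  also have "(\<Sum>j\<in>J. if j = n then c j else 0) = (if n \<in> J then c n else 0)"
    using fJ by (simp add: sum.delta')
  finally show ?thesis .
qed

lemma bad_indep:
  assumes fin: "finite J"
  shows "bad J \<longleftrightarrow> \<not> indep J"
proof
  assume "bad J"
  then obtain y where y0: "y \<noteq> 0" and yo: "\<And>n. n \<notin> J \<Longrightarrow> cinner y (g n) = 0"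
    unfolding bad_def by blast
  define c where "c j = cinner y (g j)" for j
  have tail0: "(\<lambda>m. if m \<notin> J then cinner y (g m) * cinner (g m) z else 0) = (\<lambda>m. 0)" for z
    using yo by auto
  have z: "lc J c = (\<lambda>n. 0)"
  proof
    fix n
    have "cinner y (g n) = (\<Sum>j\<in>J. c j * cinner (g j) (g n))"
      using split_pol[OF fin, of y n] unfolding tail0 c_def by simp
    then show "lc J c n = 0" unfolding lc_eq[OF fin] using yo by (auto simp: c_def)
  qed
  have "(\<lambda>n. if n \<notin> J then (cmod (cinner y (g n)))\<^sup>2 else 0) = (\<lambda>n. 0)" using yo by auto
  then have T0: "T J y = 0" unfolding T_def by simp
  have "(\<Sum>j\<in>J. (cmod (c j))\<^sup>2) = (norm y)\<^sup>2" using split_norm[OF fin, of y] T0 by (simp add: c_def)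
  moreover have "(norm y)\<^sup>2 > 0" using y0 by simp
  ultimately have "\<exists>j\<in>J. c j \<noteq> 0" by (metis (mono_tags, lifting) less_irrefl norm_zero power_zero_numeral sum.neutral)
  then show "\<not> indep J" using z unfolding indep_def by blast
next
  assume "\<not> indep J"
  then obtain c j0 where z: "lc J c = (\<lambda>n. 0)" and j0: "j0 \<in> J" "c j0 \<noteq> 0"
    unfolding indep_def by blast
  define y where "y = (\<Sum>j\<in>J. c j *\<^sub>C g j)"
  have yg: "cinner y (g n) = (if n \<in> J then c n else 0)" for n
  proof -
    have "cinner y (g n) = (\<Sum>j\<in>J. c j * cinner (g j) (g n))"
      unfolding y_def by (simp add: cinner_sum_left cinner_scaleC_left)
    moreover have "lc J c n = 0" using z by (simp add: fun_eq_iff)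
    ultimately show ?thesis unfolding lc_eq[OF fin] by simp
  qed
  have "y \<noteq> 0"
  proof
    assume "y = 0"
    then have "cinner y (g j0) = 0" by simp
    then show False using yg[of j0] j0 by simp
  qed
  then show "bad J" unfolding bad_def using yg by auto
qed

lemma bad_mono: "bad A \<Longrightarrow> A \<subseteq> B \<Longrightarrow> bad B"
  unfolding bad_def by blast

lemma indep_insert2:
  assumes "indep K" "finite K" "\<not> insp K (q l)"
  shows "indep (insert l K)"
proof -
  have lK: "l \<notin> K" using assms(2,3) insp_q by blast
  show ?thesis unfolding indep_def
  proof (intro allI impI ballI)
    fix c j assume z: "lc (insert l K) c = (\<lambda>n. 0)" and j: "j \<in> insert l K"
    have split: "lc (insert l K) c n = c l * q l n + lc K c n" for n
      unfolding lc_def by (rule sum.insert[OF assms(2) lK])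
    have cl: "c l = 0"
    proof (rule ccontr)
      assume cl: "c l \<noteq> 0"
      have "q l = (\<lambda>n. (- 1 / c l) * lc K c n)"
      proof
        fix n
        have "c l * q l n + lc K c n = 0" using z split[of n] by (simp add: fun_eq_iff)
        then show "q l n = (- 1 / c l) * lc K c n" using cl by (simp add: field_simps add_eq_0_iff)
      qed
      moreover have "insp K (\<lambda>n. (- 1 / c l) * lc K c n)" by (rule insp_scale) (auto simp: insp_def)
      ultimately show False using assms(3) by simp
    qed
    have "lc K c = (\<lambda>n. 0)" using z split cl by (simp add: fun_eq_iff)
    then have "\<forall>j\<in>K. c j = 0" using assms(1)[unfolded indep_def, rule_format] by blast
    then show "c j = 0" using j cl by auto
  qed
qed

end

lemma frame_on_prepend:
  fixes f x :: "nat \<Rightarrow> 'a::complex_inner"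
  shows "frame_on f (UNIV - J) \<longleftrightarrow> frame_on (prepend k x f) (UNIV - ((\<lambda>n. n + k) ` J \<union> {..<k}))"
proof -
  define I where "I = (\<lambda>n. n + k) ` J \<union> {..<k}"
  define H where "H y n = (if n \<in> UNIV - I then (cmod (cinner y (prepend k x f n)))\<^sup>2 else 0)" for y n
  define F where "F y n = (if n \<in> UNIV - J then (cmod (cinner y (f n)))\<^sup>2 else 0)" for y n
  have shift: "(\<lambda>m. H y (m + k)) = F y" for y
    by (auto simp: H_def F_def I_def prepend_def fun_eq_iff)
  have low: "(\<Sum>i<k. H y i) = 0" for y by (simp add: H_def I_def)
  have sums_eq: "H y sums s \<longleftrightarrow> F y sums s" for y s
    using sums_iff_shift[of "H y" k s] unfolding shift low by simp
  have S: "summable (H y) \<longleftrightarrow> summable (F y)" for y unfolding summable_def sums_eq ..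
  have V: "suminf (H y) = suminf (F y)" for y unfolding suminf_def sums_eq ..
  have "frame_on f (UNIV - J) \<longleftrightarrow> (\<forall>y. summable (F y)) \<and> (\<exists>A B. 0 < A \<and> (\<forall>y. A * (norm y)\<^sup>2 \<le> suminf (F y) \<and> suminf (F y) \<le> B * (norm y)\<^sup>2))"
    unfolding frame_on_def F_def ..
  also have "\<dots> \<longleftrightarrow> (\<forall>y. summable (H y)) \<and> (\<exists>A B. 0 < A \<and> (\<forall>y. A * (norm y)\<^sup>2 \<le> suminf (H y) \<and> suminf (H y) \<le> B * (norm y)\<^sup>2))"
    unfolding S V ..
  also have "\<dots> \<longleftrightarrow> frame_on (prepend k x f) (UNIV - I)"
    unfolding frame_on_def H_def ..
  finally show ?thesis unfolding I_def .
qed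

lemma card_shift:
  assumes "finite J"
  shows "card ((\<lambda>n. n + k) ` J \<union> {..<k}) = card J + k"
proof -
  have "card ((\<lambda>n. n + k) ` J \<union> {..<k}) = card ((\<lambda>n. n + k) ` J) + card {..<k::nat}"
    by (rule card_Un_disjoint) (use assms in auto)
  also have "card ((\<lambda>n. n + k) ` J) = card J" by (rule card_image) (simp add: inj_on_def)
  finally show ?thesis by simp
qed

lemma shift_preimage:
  assumes "{..<k} \<subseteq> J"
  shows "(\<lambda>n. n + k) ` {m. m + k \<in> J} \<union> {..<k} = (J::nat set)"
proof
  show "(\<lambda>n. n + k) ` {m. m + k \<in> J} \<union> {..<k} \<subseteq> J" using assms by auto
  show "J \<subseteq> (\<lambda>n. n + k) ` {m. m + k \<in> J} \<union> {..<k}"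
  proof
    fix n assume n: "n \<in> J"
    show "n \<in> (\<lambda>n. n + k) ` {m. m + k \<in> J} \<union> {..<k}"
    proof (cases "n < k")
      case False
      then have "n = (n - k) + k" by simp
      then show ?thesis using n by (metis (mono_tags, lifting) UnI1 image_eqI mem_Collect_eq)
    qed simp
  qed
qed

theorem corollary3p7:
  fixes f :: "nat \<Rightarrow> 'a::{complex_inner, complete_space}"
    and x :: "nat \<Rightarrow> 'a" and k :: nat
  assumes "separable_space TYPE('a)"
    and "infinite_dimensional TYPE('a)"
    and "frame f"
    and "optimal_upper_frame_bound f = 1"
    and "excess f < \<infinity>"
    and "finite_dim_set (range (\<lambda>y. y - frame_op f y))"
    and "parseval_frame (prepend k x f)"
  shows "summable (\<lambda>n. 1 - (norm (f n))\<^sup>2) \<and>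
         (\<Sum>n<k. (norm (x n))\<^sup>2) = (\<Sum>n. 1 - (norm (f n))\<^sup>2) - real (the_enat (excess f))"
proof -
  define g where "g = prepend k x f"
  interpret pf g by unfold_locales (use assms(7) in \<open>simp add: g_def\<close>)
  define K0 where "K0 = {..<k}"
  define sh where "sh J = (\<lambda>n. n + k) ` J \<union> K0" for J
  have tr: "frame_on f (UNIV - J) \<longleftrightarrow> frame_on g (UNIV - sh J)" for J
    unfolding g_def sh_def K0_def by (rule frame_on_prepend)
  have fin_sh: "finite J \<Longrightarrow> finite (sh J)" for J by (simp add: sh_def K0_def)
  have card_sh: "finite J \<Longrightarrow> card (sh J) = card J + k" for J
    unfolding sh_def K0_def by (rule card_shift)
  have good: "finite J \<Longrightarrow> frame_on f (UNIV - J) \<longleftrightarrow> indep (sh J)" for J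
    using tr[of J] frame_iff_notbad[OF fin_sh] bad_indep[OF fin_sh] by blast
  have K0sh: "K0 \<subseteq> sh J" for J by (simp add: sh_def)
  obtain e where e: "excess f = enat e" using assms(5) by (cases "excess f") auto
  have ecard_le: "ecard J \<le> enat e" if "frame_on f (UNIV - J)" for J
  proof -
    have "ecard J \<le> excess f" unfolding excess_def by (rule Sup_upper) (use that in blast)
    then show ?thesis using e by simp
  qed
  define P where "P m \<longleftrightarrow> (\<exists>J. finite J \<and> K0 \<subseteq> J \<and> indep J \<and> card J = m)" for m
  have pre: "finite {m. m + k \<in> J} \<and> sh {m. m + k \<in> J} = J \<and> card J = card {m. m + k \<in> J} + k"
    if J: "finite J" "K0 \<subseteq> J" for J
  proof -
    have f1: "finite {m. m + k \<in> J}"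
      using finite_vimageI[OF J(1), of "\<lambda>m. m + k"] by (simp add: vimage_def inj_on_def)
    have s: "sh {m. m + k \<in> J} = J" unfolding sh_def using shift_preimage[of k J] J(2) by (simp add: K0_def)
    show ?thesis using f1 s card_sh[OF f1] by simp
  qed
  have Pk: "P k"
  proof -
    have "frame_on f (UNIV - {})" using assms(3) by (simp add: frame_def)
    then have "indep (sh {})" using good[of "{}"] by simp
    moreover have "sh {} = K0" by (simp add: sh_def)
    ultimately show ?thesis unfolding P_def by (intro exI[of _ K0]) (simp add: K0_def)
  qed
  have Pb: "\<forall>m. P m \<longrightarrow> m \<le> e + k"
  proof (intro allI impI)
    fix m assume "P m"
    then obtain J where J: "finite J" "K0 \<subseteq> J" "indep J" "card J = m" unfolding P_def by blast
    define J' where "J' = {m. m + k \<in> J}"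
    have p: "finite J'" "sh J' = J" "card J = card J' + k" using pre[OF J(1,2)] by (simp_all add: J'_def)
    have "frame_on f (UNIV - J')" using good[OF p(1)] p(2) J(3) by simp
    then have "ecard J' \<le> enat e" by (rule ecard_le)
    then have "card J' \<le> e" using p(1) by (simp add: ecard_def)
    then show "m \<le> e + k" using p(3) J(4) by simp
  qed
  have Pb': "\<forall>y. P y \<longrightarrow> (\<lambda>m. m) y < Suc (e + k)" using Pb by (simp add: less_Suc_eq_le)
  obtain M where PM: "P M" and Mmax: "\<And>m. P m \<Longrightarrow> m \<le> M"
    using ex_has_greatest_nat[OF Pk Pb'] by auto
  obtain JJ where JJ: "finite JJ" "K0 \<subseteq> JJ" "indep JJ" "card JJ = M" using PM unfolding P_def by blast
  have kM: "k \<le> M" using card_mono[OF JJ(1,2)] JJ(4) by (simp add: K0_def)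
  have spanall: "insp JJ (q l)" for l
  proof (rule ccontr)
    assume n: "\<not> insp JJ (q l)"
    have lJ: "l \<notin> JJ" using n insp_q[OF _ JJ(1)] by blast
    have "indep (insert l JJ)" by (rule indep_insert2[OF JJ(3,1) n])
    then have "P (Suc M)" unfolding P_def using JJ lJ
      by (intro exI[of _ "insert l JJ"]) auto
    then show False using Mmax by fastforce
  qed
  have tq: "(\<lambda>l. q l l) sums of_nat M" using trace[OF JJ(1,3) spanall] JJ(4) by simp
  have qll: "q l l = complex_of_real (1 - (norm (g l))\<^sup>2)" for l
    by (simp add: q_def cinner_self)
  have tg: "(\<lambda>l. 1 - (norm (g l))\<^sup>2) sums real M"
    using sums_Re[OF tq] unfolding qll by simp
  have gs: "g (n + k) = f n" for n by (simp add: g_def prepend_def)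
  have gx: "n < k \<Longrightarrow> g n = x n" for n by (simp add: g_def prepend_def)
  have tf: "(\<lambda>n. 1 - (norm (f n))\<^sup>2) sums (real M - (\<Sum>i<k. 1 - (norm (g i))\<^sup>2))"
    using sums_split_initial_segment[OF tg, of k] unfolding gs .
  have low: "(\<Sum>i<k. 1 - (norm (g i))\<^sup>2) = real k - (\<Sum>i<k. (norm (x i))\<^sup>2)"
    by (simp add: sum_subtractf gx)
  have exc: "excess f = enat (M - k)"
  proof (rule antisym)
    show "excess f \<le> enat (M - k)" unfolding excess_def
    proof (rule Sup_least)
      fix z assume "z \<in> {ecard J |J. frame_on f (UNIV - J)}"
      then obtain J where z: "z = ecard J" and fJ: "frame_on f (UNIV - J)" by blast
      show "z \<le> enat (M - k)"
      proof (cases "finite J")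
        case True
        then have "indep (sh J)" using good fJ by blast
        then have "P (card J + k)" unfolding P_def using fin_sh[OF True] card_sh[OF True] K0sh by blast
        then have "card J + k \<le> M" by (rule Mmax)
        then show ?thesis using True z by (simp add: ecard_def)
      next
        case False
        obtain J0 where J0: "finite J0" "card J0 = Suc (M - k)" "J0 \<subseteq> J"
          using infinite_arbitrarily_large[OF False] by blast
        have "\<not> bad (sh J)" using frame_imp_notbad tr fJ by blast
        moreover have "sh J0 \<subseteq> sh J" using J0(3) by (auto simp: sh_def)
        ultimately have "\<not> bad (sh J0)" using bad_mono by blast
        then have "indep (sh J0)" using bad_indep[OF fin_sh[OF J0(1)]] by blast
        then have "P (card J0 + k)" unfolding P_def using fin_sh[OF J0(1)] card_sh[OF J0(1)] K0sh by blast
        then have "card J0 + k \<le> M" by (rule Mmax)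
        then show ?thesis using J0(2) kM by simp
      qed
    qed
  next
    define J' where "J' = {m. m + k \<in> JJ}"
    have p: "finite J'" "sh J' = JJ" "card JJ = card J' + k" using pre[OF JJ(1,2)] by (simp_all add: J'_def)
    have "frame_on f (UNIV - J')" using good[OF p(1)] p(2) JJ(3) by simp
    then have "ecard J' \<le> excess f" unfolding excess_def by (intro Sup_upper) blast
    moreover have "ecard J' = enat (M - k)" using p JJ(4) by (simp add: ecard_def)
    ultimately show "enat (M - k) \<le> excess f" by simp
  qed
  have "the_enat (excess f) = M - k" using exc by simp
  then have rex: "real (the_enat (excess f)) = real M - real k" using kM by simp
  show ?thesis
  proof
    show "summable (\<lambda>n. 1 - (norm (f n))\<^sup>2)" using tf by (rule sums_summable)
    have "(\<Sum>n. 1 - (norm (f n))\<^sup>2) = real M - (real k - (\<Sum>i<k. (norm (x i))\<^sup>2))"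
      using sums_unique[OF tf] low by simp
    then show "(\<Sum>n<k. (norm (x n))\<^sup>2) = (\<Sum>n. 1 - (norm (f n))\<^sup>2) - real (the_enat (excess f))"
      using rex by simp
  qed
qed


end
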